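(* Let $\mathbf{E},\mathbf{F}$ be finite-dimensional Euclidean spaces, $\mathcal{K}\subset\mathbf{E}$ a proper cone, $\mathcal{A}:\mathbf{E}\to\mathbf{F}$ linear, $b\in\mathbf{F}$, $c\in\mathbf{E}$, and consider the conic program $\min\{\langle c,x\rangle:\mathcal{A}x=b,\ x\in\mathcal{K}\}$ and its dual $\max\{\langle b,y\rangle: c-\mathcal{A}^*y\in\mathcal{K}^*\}$. Suppose strong duality holds, let $y_\star$ be a dual solution from a strong-duality pair and $s_\star=c-\mathcal{A}^*y_\star$, and set $\epsilon(x)=\langle s_\star,x\rangle$. For $x\in\mathbf{E}$ let $x_+=P_{\mathcal{K}}(x)$. Then: 1. If $s_\star=0$, then $\|P_{\mathcal{V}_{s_\star}^\perp}(x_+)\|_2=0$. 2. If $s_\star\in\mathrm{int}(\mathcal{K}^* )$, then $\|P_{\mathcal{V}_{s_\star}^\perp}(x_+)\|_2=\|x_+\|_2\le c_\star\,\epsilon(x_+)$, where $c_\star=\sup_{x\in\mathcal{K}\setminus\{0\}}\frac{1}{\langle s_\star, x/\|x\|_2\rangle}<\infty$. Moreover, if $s_\star\in\partial\mathcal{K}^*\setminus\{0\}$: 3. If $\mathcal{K}=\mathbb{R}^n_+$: $\|P_{\mathcal{V}_{s_\star}^\perp}(x_+)\|_2\le \frac{1}{s_{\min>0}}\epsilon(x_+)$, where $s_{\min>0}$ is the smallest nonzero entry of $s_\star$. 4. If $\mathcal{K}=\mathrm{SOC}^n=\{(x_{1:n},x_{n+1})\in\mathbb{R}^n\times\mathbb{R}:\|x_{1:n}\|_2\le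 x_{n+1}\}$: $\|P_{\mathcal{V}_{s_\star}^\perp}(x_+)\|_2\le\sqrt{2\sqrt2\,\frac{\|x\|_2\,\epsilon(x_+)}{\|s_\star\|_2}}$. 5. If $\mathcal{K}=\mathbb{S}^n_+$ (with trace inner product, writing $X,S_\star$ for matrices): $\|P_{\mathcal{V}_{S_\star}^\perp}(X_+)\|_F\le\frac{\epsilon(X_+)}{T}+\sqrt{2\frac{\epsilon(X_+)}{T}\|X\|_{\mathrm{op}}}$, where $T$ is the smallest nonzero eigenvalue of $S_\star$.
   Context: $\mathcal{K}^*$ is the dual cone. Strong duality: the primal and dual solution sets are nonempty, the primal solution set is compact, and there is a primal–dual solution pair $(x_\star,y_\star)$ with $\langle c,x_\star\rangle=\langle b,y_\star\rangle$. The complementary face is $\mathcal{F}_{s_\star}=\{x\in\mathcal{K}:\langle x,s_\star\rangle=0\}$ and the complementary space is $\mathcal{V}_{s_\star}=\mathrm{aff}(\mathcal{F}_{s_\star})$, a linear subspace; $\mathcal{V}_{s_\star}^\perp$ is its orthogonal complement and $P_C$ denotes Euclidean projection onto $C$. $\mathbb{R}^n$ carries the dot product and $\mathbb{S}^n$ (symmetric $n\times n$ matrices) the trace inner product; $\|\cdot\|_F$ and $\|\cdot\|_{\mathrm{op}}$ are Frobenius and operator norms. *)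

theory Defs
  imports "HOL-Analysis.Analysis"
begin

text \<open>The finite-dimensional Euclidean space E is modelled as a linear subspace E of an
  ambient Euclidean type 'a with the induced inner product (for R^n and R^n x R we take
  E = UNIV; for S^n we take the symmetric matrices inside real^'n^'n, whose inner product
  is the trace inner product).\<close>

definition lin_on :: "'a::real_vector set \<Rightarrow> ('a \<Rightarrow> 'b::real_vector) \<Rightarrow> bool" where
  "lin_on E A \<longleftrightarrow> (\<forall>x\<in>E. \<forall>y\<in>E. A (x + y) = A x + A y) \<and> (\<forall>x\<in>E. \<forall>r. A (r *\<^sub>R x) = r *\<^sub>R A x)"

definition adjE :: "'a::real_inner set \<Rightarrow> ('a \<Rightarrow> 'b::real_inner) \<Rightarrow> 'b \<Rightarrow> 'a" where
  "adjE E A y = (THE z. z \<in> E \<and> (\<forall>x\<in>E. inner (A x) y = inner x z))"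

definition int_in :: "'a::metric_space set \<Rightarrow> 'a set \<Rightarrow> 'a set" where
  "int_in E S = {s \<in> S. \<exists>e>0. \<forall>t\<in>E. dist t s < e \<longrightarrow> t \<in> S}"

definition bd_in :: "'a::metric_space set \<Rightarrow> 'a set \<Rightarrow> 'a set" where
  "bd_in E S = closure S - int_in E S"

definition dual_cone :: "'a::real_inner set \<Rightarrow> 'a set \<Rightarrow> 'a set" where
  "dual_cone E K = {s \<in> E. \<forall>x\<in>K. 0 \<le> inner s x}"

definition proper_cone :: "'a::real_normed_vector set \<Rightarrow> 'a set \<Rightarrow> bool" where
  "proper_cone E K \<longleftrightarrow> K \<subseteq> E \<and> closed K \<and> convex K \<and> cone K
     \<and> (\<forall>x. x \<in> K \<and> - x \<in> K \<longrightarrow> x = 0) \<and> int_in E K \<noteq> {}"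

definition primal_feas :: "'a set \<Rightarrow> ('a \<Rightarrow> 'b) \<Rightarrow> 'b \<Rightarrow> 'a set" where
  "primal_feas K A b = {x \<in> K. A x = b}"

definition primal_sol :: "'a::real_inner set \<Rightarrow> ('a \<Rightarrow> 'b) \<Rightarrow> 'b \<Rightarrow> 'a \<Rightarrow> 'a set" where
  "primal_sol K A b c = {x \<in> primal_feas K A b. \<forall>z \<in> primal_feas K A b. inner c x \<le> inner c z}"

definition dual_feas :: "'a::real_inner set \<Rightarrow> 'a set \<Rightarrow> ('a \<Rightarrow> 'b::real_inner) \<Rightarrow> 'a \<Rightarrow> 'b set" where
  "dual_feas E K A c = {y. c - adjE E A y \<in> dual_cone E K}"

definition dual_sol :: "'a::real_inner set \<Rightarrow> 'a set \<Rightarrow> ('a \<Rightarrow> 'b::real_inner) \<Rightarrow> 'b \<Rightarrow> 'a \<Rightarrow> 'b set" where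
  "dual_sol E K A b c = {y \<in> dual_feas E K A c. \<forall>w \<in> dual_feas E K A c. inner b w \<le> inner b y}"

definition conic_setting :: "'a::euclidean_space set \<Rightarrow> 'a set \<Rightarrow> ('a \<Rightarrow> 'b::euclidean_space) \<Rightarrow> 'b \<Rightarrow> 'a \<Rightarrow> 'b \<Rightarrow> bool" where
  "conic_setting E K A b c ystar \<longleftrightarrow>
     subspace E \<and> proper_cone E K \<and> lin_on E A \<and> c \<in> E
     \<and> primal_sol K A b c \<noteq> {} \<and> dual_sol E K A b c \<noteq> {} \<and> compact (primal_sol K A b c)
     \<and> (\<exists>xs. xs \<in> primal_sol K A b c \<and> ystar \<in> dual_sol E K A b c \<and> inner c xs = inner b ystar)"

definition compl_face :: "'a::real_inner set \<Rightarrow> 'a \<Rightarrow> 'a set" where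
  "compl_face K s = {x \<in> K. inner x s = 0}"

definition compl_space :: "'a::real_inner set \<Rightarrow> 'a \<Rightarrow> 'a set" where
  "compl_space K s = affine hull (compl_face K s)"

definition orth_in :: "'a::real_inner set \<Rightarrow> 'a set \<Rightarrow> 'a set" where
  "orth_in E V = {v \<in> E. \<forall>w\<in>V. inner v w = 0}"

definition eigval :: "real^'n^'n \<Rightarrow> real \<Rightarrow> bool" where
  "eigval M l \<longleftrightarrow> (\<exists>v. v \<noteq> 0 \<and> M *v v = l *\<^sub>R v)"

end

theory Submission
  imports Defs
begin


lemma cone_has0: "cone C \<Longrightarrow> C \<noteq> {} \<Longrightarrow> 0 \<in> C"
  unfolding cone_def by (metis all_not_in_conv order_refl scaleR_zero_left)

lemma proj_cone:
  fixes C :: "'a::euclidean_space set"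
  assumes cl: "closed C" and cv: "convex C" and ne: "C \<noteq> {}" and co: "cone C"
  shows "closest_point C y \<in> C"
    and "inner (closest_point C y) (closest_point C y) = inner y (closest_point C y)"
    and "\<And>z. z \<in> C \<Longrightarrow> inner (y - closest_point C y) z \<le> 0"
    and "norm (closest_point C y) \<le> norm y"
proof -
  let ?p = "closest_point C y"
  show pC: "?p \<in> C" using closest_point_in_set[OF cl ne] .
  have 0: "0 \<in> C" using cone_has0[OF co ne] .
  have 2: "2 *\<^sub>R ?p \<in> C" using co pC unfolding cone_def by auto
  have a: "inner (y - ?p) (0 - ?p) \<le> 0" by (rule closest_point_dot[OF cv cl 0])
  have b: "inner (y - ?p) (2 *\<^sub>R ?p - ?p) \<le> 0" by (rule closest_point_dot[OF cv cl 2])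
  have e: "inner (y - ?p) ?p = 0" using a b by (simp add: algebra_simps inner_diff_right)
  then show eq: "inner ?p ?p = inner y ?p" by (simp add: inner_diff_left)
  show "inner (y - ?p) z \<le> 0" if z: "z \<in> C" for z
  proof -
    have "(1/2) *\<^sub>R z + (1/2) *\<^sub>R ?p \<in> C"
      using convexD[OF cv z pC, of "1/2" "1/2"] by simp
    then have "2 *\<^sub>R ((1/2) *\<^sub>R z + (1/2) *\<^sub>R ?p) \<in> C" using co unfolding cone_def by auto
    then have "z + ?p \<in> C" by (simp add: scaleR_add_right)
    from closest_point_dot[OF cv cl this, of y] show ?thesis by simp
  qed
  have "norm ?p ^ 2 \<le> norm y * norm ?p"
    using eq Cauchy_Schwarz_ineq2[of y ?p] by (simp add: power2_norm_eq_inner)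
  then show "norm ?p \<le> norm y"
    by (metis mult_right_le_imp_le norm_ge_zero power2_eq_square zero_less_mult_iff
        mult_zero_left norm_zero order.order_iff_strict zero_less_norm_iff)
qed

lemma orth_in_subspace:
  assumes "subspace E" shows "subspace (orth_in E W)"
  using assms unfolding orth_in_def subspace_def by (auto simp: inner_add_left)

lemma subspace_cc:
  fixes V :: "'a::euclidean_space set"
  assumes "subspace V" shows "closed V" "convex V" "V \<noteq> {}" "cone V"
  using assms closed_subspace subspace_imp_convex subspace_0 unfolding cone_def subspace_def
  by auto

lemma proj_orth:
  fixes E :: "'a::euclidean_space set" and K and s y
  assumes "subspace E"
  defines "p \<equiv> closest_point (orth_in E (compl_space K s)) y"
  shows "p \<in> E" "inner p p = inner y p" "\<And>w. w \<in> compl_face K s \<Longrightarrow> inner p w = 0"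
    "norm p \<le> norm y"
proof -
  let ?V = "orth_in E (compl_space K s)"
  have sV: "subspace ?V" by (rule orth_in_subspace[OF assms(1)])
  note pc = proj_cone[OF subspace_cc[OF sV], of y]
  have pV: "p \<in> ?V" using pc(1) p_def by simp
  then show "p \<in> E" unfolding orth_in_def by auto
  show "inner p p = inner y p" using pc(2) p_def by simp
  show "norm p \<le> norm y" using pc(4) p_def by simp
  fix w assume "w \<in> compl_face K s"
  then have "w \<in> compl_space K s" unfolding compl_space_def by (simp add: hull_inc)
  then show "inner p w = 0" using pV unfolding orth_in_def by auto
qed

lemma cs_facts:
  assumes "conic_setting E K A b c ystar"
  shows "subspace E" "proper_cone E K" "c - adjE E A ystar \<in> dual_cone E K"
  using assms unfolding conic_setting_def dual_sol_def dual_feas_def by auto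

lemma pc_facts:
  assumes "proper_cone E K"
  shows "closed K" "convex K" "K \<noteq> {}" "cone K" "K \<subseteq> E" "int_in E K \<noteq> {}"
  using assms unfolding proper_cone_def int_in_def by auto

lemma part1:
  assumes cs: "conic_setting E K A b c ystar" and "x \<in> E" and s0: "c - adjE E A ystar = 0"
  shows "norm (closest_point (orth_in E (compl_space K (c - adjE E A ystar))) (closest_point K x)) = 0"
proof -
  note sE = cs_facts(1)[OF cs]
  note pf = pc_facts[OF cs_facts(2)[OF cs]]
  define p where "p = closest_point (orth_in E (compl_space K (c - adjE E A ystar))) (closest_point K x)"
  note pp = proj_orth[OF sE, where K=K and s="c - adjE E A ystar" and y="closest_point K x", folded p_def]
  have perp: "inner p w = 0" if "w \<in> K" for w
    using pp(3)[of w] that s0 unfolding compl_face_def by simp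
  obtain k0 e where k0: "k0 \<in> K" "e > 0" "\<And>t. t \<in> E \<Longrightarrow> dist t k0 < e \<Longrightarrow> t \<in> K"
    using pf(6) unfolding int_in_def by auto
  have "p = 0"
  proof (rule ccontr)
    assume pn: "p \<noteq> 0"
    define t where "t = k0 + (e / 2 / norm p) *\<^sub>R p"
    have "t \<in> E" unfolding t_def using sE pf(5) k0(1) pp(1)
      by (meson subsetD subspace_add subspace_mul)
    moreover have "dist t k0 < e" using pn k0(2) unfolding t_def dist_norm by simp
    ultimately have "t \<in> K" using k0(3) by blast
    then have "inner p t = 0" by (rule perp)
    moreover have "inner p k0 = 0" using perp k0(1) .
    ultimately have "(e / 2 / norm p) * inner p p = 0" unfolding t_def by (simp add: inner_add_right)
    then show False using pn k0(2) by simp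
  qed
  then show ?thesis unfolding p_def by simp
qed

lemma part2:
  assumes cs: "conic_setting E K A b c ystar" and xE: "x \<in> E"
    and sint: "c - adjE E A ystar \<in> int_in E (dual_cone E K)"
  shows "(let s = c - adjE E A ystar; xp = closest_point K x;
           Q = {1 / inner s (z /\<^sub>R norm z) | z. z \<in> K - {0}}
       in bdd_above Q
          \<and> norm (closest_point (orth_in E (compl_space K s)) xp) = norm xp
          \<and> norm xp \<le> Sup Q * inner s xp)"
proof -
  define s where "s = c - adjE E A ystar"
  define xp where "xp = closest_point K x"
  define Q where "Q = {1 / inner s (z /\<^sub>R norm z) | z. z \<in> K - {0}}"
  note sE = cs_facts(1)[OF cs]
  note pf = pc_facts[OF cs_facts(2)[OF cs]]
  have xpK: "xp \<in> K" unfolding xp_def by (rule closest_point_in_set[OF pf(1) pf(3)])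
  obtain e where e: "e > 0" "\<And>t. t \<in> E \<Longrightarrow> dist t s < e \<Longrightarrow> t \<in> dual_cone E K"
    and sD: "s \<in> dual_cone E K"
    using sint unfolding int_in_def s_def by auto
  have sEE: "s \<in> E" using sD unfolding dual_cone_def by auto
  have key: "inner s (z /\<^sub>R norm z) \<ge> e / 2" if z: "z \<in> K" "z \<noteq> 0" for z
  proof -
    define u where "u = z /\<^sub>R norm z"
    have nu: "norm u = 1" using z unfolding u_def by simp
    have uE: "u \<in> E" unfolding u_def using z pf(5) sE by (metis subsetD subspace_mul)
    have "s - (e/2) *\<^sub>R u \<in> E" using uE sEE sE by (metis subspace_diff subspace_mul)
    moreover have "dist (s - (e/2) *\<^sub>R u) s < e" using nu e(1) by (simp add: dist_norm)
    ultimately have "s - (e/2) *\<^sub>R u \<in> dual_cone E K" using e(2) by blast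
    then have "0 \<le> inner (s - (e/2) *\<^sub>R u) z" using z unfolding dual_cone_def by auto
    moreover have "inner (s - (e/2) *\<^sub>R u) u = inner (s - (e/2) *\<^sub>R u) z / norm z"
    proof -
      have g: "\<And>v. inner v (z /\<^sub>R norm z) = inner v z / norm z" by (simp add: field_simps)
      show ?thesis unfolding u_def by (rule g)
    qed
    ultimately have "0 \<le> inner (s - (e/2) *\<^sub>R u) u" by simp
    then show ?thesis using nu by (simp add: inner_diff_left u_def[symmetric] dot_square_norm)
  qed
  have bdd: "bdd_above Q"
  proof (rule bdd_aboveI[of _ "2 / e"])
    fix q assume "q \<in> Q"
    then obtain z where z: "z \<in> K" "z \<noteq> 0" "q = 1 / inner s (z /\<^sub>R norm z)" unfolding Q_def by auto
    have "e/2 \<le> inner s (z /\<^sub>R norm z)" using key z by auto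
    then have "1 / inner s (z /\<^sub>R norm z) \<le> 1 / (e/2)" using e(1)
      by (intro divide_left_mono) auto
    then show "q \<le> 2 / e" using z(3) by simp
  qed
  have face0: "compl_face K s \<subseteq> {0}"
  proof
    fix w assume w: "w \<in> compl_face K s"
    show "w \<in> {0}"
    proof (rule ccontr)
      assume "w \<notin> {0}"
      then have "inner s (w /\<^sub>R norm w) \<ge> e/2" using key w unfolding compl_face_def by auto
      moreover have "inner s (w /\<^sub>R norm w) = 0" using w unfolding compl_face_def
        by (simp add: inner_commute)
      ultimately show False using e(1) by linarith
    qed
  qed
  have "compl_space K s \<subseteq> {0}" unfolding compl_space_def
    by (rule hull_minimal[OF face0]) simp
  then have xpV: "xp \<in> orth_in E (compl_space K s)"
    using xpK pf(5) unfolding orth_in_def by auto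
  have eq: "norm (closest_point (orth_in E (compl_space K s)) xp) = norm xp"
    by (simp add: closest_point_self[OF xpV])
  have ineq: "norm xp \<le> Sup Q * inner s xp"
  proof (cases "xp = 0")
    case True then show ?thesis by simp
  next
    case False
    define q where "q = 1 / inner s (xp /\<^sub>R norm xp)"
    have qQ: "q \<in> Q" unfolding Q_def q_def using xpK False by auto
    have pos: "inner s (xp /\<^sub>R norm xp) \<ge> e/2" using key xpK False by auto
    have "q \<le> Sup Q" by (rule cSup_upper[OF qQ bdd])
    have ip: "inner s xp = norm xp * inner s (xp /\<^sub>R norm xp)" using False by simp
    have p1: "inner s (xp /\<^sub>R norm xp) > 0" using pos e(1) by linarith
    have ipos: "inner s xp > 0" using ip p1 False by (metis mult_pos_pos zero_less_norm_iff)
    moreover have "norm xp = q * inner s xp" unfolding q_def ip using p1 False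
      by (simp add: field_simps)
    moreover note \<open>q \<le> Sup Q\<close>
    ultimately show ?thesis by (metis less_eq_real_def mult_right_mono)
  qed
  show ?thesis unfolding Let_def s_def[symmetric] xp_def[symmetric] Q_def[symmetric]
    using bdd eq ineq by blast
qed



lemma part3_core:
  fixes s :: "real^'n"
  defines "K \<equiv> {v::real^'n. \<forall>i. 0 \<le> v $ i}"
  assumes sD: "s \<in> dual_cone UNIV K" and s0: "s \<noteq> 0"
  shows "norm (closest_point (orth_in UNIV (compl_space K s)) (closest_point K x))
        \<le> (1 / Min {s $ i | i. s $ i \<noteq> 0}) * inner s (closest_point K x)"
proof -
  have Kc: "closed K" "convex K" "K \<noteq> {}" "cone K"
    unfolding K_def using closed_positive_orthant
    by (auto simp: cone_def convex_def intro!: exI[of _ 0])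
  define xp where "xp = closest_point K x"
  have xpK: "xp \<in> K" unfolding xp_def by (rule proj_cone(1)[OF Kc])
  define p where "p = closest_point (orth_in UNIV (compl_space K s)) xp"
  note pp = proj_orth[OF subspace_UNIV, where K=K and s=s and y=xp, folded p_def]
  have sge: "0 \<le> s $ i" for i
  proof -
    have "axis i 1 \<in> K" unfolding K_def by (simp add: axis_def)
    then show ?thesis using sD unfolding dual_cone_def by (auto simp: inner_axis)
  qed
  have pz: "p $ i = 0" if "s $ i = 0" for i
  proof -
    have "axis i 1 \<in> K" unfolding K_def by (simp add: axis_def)
    then have "axis i 1 \<in> compl_face K s" unfolding compl_face_def using that
      by (auto simp: inner_axis')
    from pp(3)[OF this] show ?thesis by (simp add: inner_axis)
  qed
  define M where "M = {s $ i | i. s $ i \<noteq> 0}"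
  define m where "m = Min M"
  have Mf: "finite M" unfolding M_def by simp
  have Mne: "M \<noteq> {}" unfolding M_def using s0 by (auto simp: vec_eq_iff)
  have mM: "m \<in> M" unfolding m_def using Mf Mne by simp
  have mpos: "m > 0" using mM sge unfolding M_def by (auto simp: less_le)
  have mle: "m \<le> s $ i" if "s $ i \<noteq> 0" for i
    unfolding m_def using Mf that by (auto simp: M_def intro!: Min_le)
  define q where "q = (\<chi> i. if s $ i = 0 then 0 else xp $ i)"
  have "inner p p = inner xp p" by (rule pp(2))
  also have "\<dots> = inner q p" unfolding inner_vec_def q_def
    by (intro sum.cong) (auto simp: pz)
  also have "\<dots> \<le> norm q * norm p" by (rule norm_cauchy_schwarz)
  finally have "norm p * norm p \<le> norm q * norm p" by (simp add: dot_square_norm power2_eq_square)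
  then have pq: "norm p \<le> norm q"
    by (metis mult_right_le_imp_le norm_ge_zero order.order_iff_strict zero_less_norm_iff
        mult_zero_right norm_zero order_refl)
  have "norm q \<le> (\<Sum>i\<in>UNIV. \<bar>q $ i\<bar>)" by (rule norm_le_l1_cart)
  also have "\<dots> \<le> (\<Sum>i\<in>UNIV. (1 / m) * (s $ i * xp $ i))"
  proof (rule sum_mono)
    fix i
    have x0: "0 \<le> xp $ i" using xpK unfolding K_def by auto
    show "\<bar>q $ i\<bar> \<le> (1 / m) * (s $ i * xp $ i)"
    proof (cases "s $ i = 0")
      case True then show ?thesis by (simp add: q_def)
    next
      case False
      have "m * xp $ i \<le> s $ i * xp $ i" using mle[OF False] x0 by (simp add: mult_right_mono)
      then show ?thesis using False x0 mpos by (simp add: q_def field_simps)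
    qed
  qed
  also have "\<dots> = (1 / m) * inner s xp" by (simp add: inner_vec_def sum_distrib_left)
  finally show ?thesis using pq unfolding p_def xp_def m_def M_def by simp
qed



lemma part4_core:
  fixes s :: "(real^'n) \<times> real"
  defines "K \<equiv> {(u::real^'n, t::real). norm u \<le> t}"
  assumes sD: "s \<in> dual_cone UNIV K" and sbd: "s \<notin> int_in UNIV (dual_cone UNIV K)"
    and s0: "s \<noteq> 0"
  shows "norm (closest_point (orth_in UNIV (compl_space K s)) (closest_point K x))
        \<le> sqrt (2 * sqrt 2 * (norm x * inner s (closest_point K x)) / norm s)"
proof -
  obtain w \<tau> where s: "s = (w, \<tau>)" by (cases s)
  have Kc: "closed K" "convex K" "K \<noteq> {}" "cone K"
  proof -
    have "K = {z. norm (fst z) \<le> snd z}" unfolding K_def by auto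
    then show "closed K"
      by (simp add: closed_Collect_le continuous_on_norm continuous_on_fst continuous_on_snd
          continuous_on_id)
    show "convex K" unfolding K_def convex_def
      apply clarsimp
      apply (rule order_trans[OF norm_triangle_ineq])
      apply (auto intro!: add_mono mult_left_mono)
      done
    show "K \<noteq> {}" unfolding K_def by auto
    show "cone K" unfolding K_def cone_def by (auto intro: mult_left_mono)
  qed
  have inK: "(u, t) \<in> K \<longleftrightarrow> norm u \<le> t" for u t unfolding K_def by simp
  have dcK: "z \<in> dual_cone UNIV K \<longleftrightarrow> (\<forall>(u::real^'n) (t::real). norm u \<le> t \<longrightarrow> 0 \<le> inner z (u, t))" for z
    unfolding dual_cone_def K_def by auto
  have tge: "norm w \<le> \<tau>"
  proof (cases "w = 0")
    case True
    have "0 \<le> inner s (0, 1)" using sD unfolding dcK by simp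
    then show ?thesis using True s by simp
  next
    case False
    have "0 \<le> inner s (-w, norm w)" using sD unfolding dcK by simp
    then have "0 \<le> norm w * (\<tau> - norm w)" using s
      by (simp add: algebra_simps dot_square_norm power2_eq_square)
    then show ?thesis using False by (simp add: zero_le_mult_iff)
  qed
  have teq: "\<tau> = norm w"
  proof (rule ccontr)
    assume "\<tau> \<noteq> norm w"
    then have gap: "\<tau> - norm w > 0" using tge by simp
    define e where "e = (\<tau> - norm w) / 2"
    have e0: "e > 0" using gap unfolding e_def by simp
    have "s \<in> int_in UNIV (dual_cone UNIV K)"
      unfolding int_in_def
    proof (intro CollectI conjI exI[of _ e] e0 ballI impI sD)
      fix z :: "(real^'n) \<times> real" assume z: "dist z s < e"
      obtain w' \<tau>' where zz: "z = (w', \<tau>')" by (cases z)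
      have d1: "norm (w' - w) < e" using dist_fst_le[of z s] z zz s by (simp add: dist_norm)
      have d2: "\<bar>\<tau>' - \<tau>\<bar> < e" using dist_snd_le[of z s] z zz s by (simp add: dist_real_def)
      have "norm w' \<le> norm w + norm (w' - w)" by (metis norm_triangle_sub add.commute)
      moreover have d2': "\<tau> - e < \<tau>'" using d2 by (simp add: abs_less_iff)
      ultimately have g2: "norm w' \<le> \<tau>'" using d1 unfolding e_def by argo
      show "z \<in> dual_cone UNIV K" unfolding dcK
      proof (intro allI impI)
        fix u :: "real^'n" and t :: real assume ut: "norm u \<le> t"
        have "- (w' \<bullet> u) \<le> norm w' * norm u" using norm_cauchy_schwarz[of "-w'" u] by simp
        also have "\<dots> \<le> \<tau>' * t" using g2 ut by (intro mult_mono) (auto intro: order_trans[OF norm_ge_zero])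
        finally show "0 \<le> inner z (u, t)" using zz by simp
      qed
    qed
    then show False using sbd by blast
  qed
  have w0: "norm w > 0" using s0 s teq by (auto simp: zero_prod_def)
  define d where "d = (- (1 / norm w) *\<^sub>R w, 1::real)"
  have dK: "d \<in> K" unfolding d_def K_def using w0 by simp
  have ds: "inner d s = 0" unfolding d_def s teq using w0
    by (simp add: dot_square_norm power2_eq_square)
  have dface: "d \<in> compl_face K s" unfolding compl_face_def using dK ds by simp
  have dn: "inner d d = 2" unfolding d_def inner_Pair using w0 by (simp add: dot_square_norm power2_eq_square)
  define xp where "xp = closest_point K x"
  have xpK: "xp \<in> K" unfolding xp_def by (rule proj_cone(1)[OF Kc])
  have xpx: "norm xp \<le> norm x" unfolding xp_def by (rule proj_cone(4)[OF Kc])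
  obtain u t where xpu: "xp = (u, t)" by (cases xp)
  have ut: "norm u \<le> t" using xpK xpu inK by simp
  define p where "p = closest_point (orth_in UNIV (compl_space K s)) xp"
  note pp = proj_orth[OF subspace_UNIV, where K=K and s=s and y=xp, folded p_def]
  have pd: "inner p d = 0" by (rule pp(3)[OF dface])
  define q where "q = xp - (inner xp d / 2) *\<^sub>R d"
  have "inner p p = inner xp p" by (rule pp(2))
  also have "\<dots> = inner q p"
  proof -
    have "inner d p = 0" using pd by (simp add: inner_commute)
    then show ?thesis unfolding q_def inner_diff_left inner_scaleR_left by simp
  qed
  also have "\<dots> \<le> norm q * norm p" by (rule norm_cauchy_schwarz)
  finally have "norm p * norm p \<le> norm q * norm p" by (simp add: dot_square_norm power2_eq_square)
  then have pq: "norm p \<le> norm q"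
    by (metis mult_right_le_imp_le norm_ge_zero order.order_iff_strict zero_less_norm_iff
        mult_zero_right norm_zero order_refl)
  define a where "a = inner u w / norm w"
  have xd: "inner xp d = t - a" unfolding xpu d_def a_def by (simp add: inner_commute)
  have qn: "norm q ^ 2 = norm u ^ 2 + t ^ 2 - (t - a) ^ 2 / 2"
  proof -
    have "norm q ^ 2 = inner q q" by (simp add: dot_square_norm)
    also have "\<dots> = inner xp xp - (inner xp d) ^ 2 + (inner xp d / 2) ^ 2 * inner d d"
      unfolding q_def by (simp add: inner_diff_left inner_diff_right inner_commute power2_eq_square
          algebra_simps)
    also have "\<dots> = norm u ^ 2 + t ^ 2 - (t - a) ^ 2 / 2"
    proof -
      have "inner xp xp = norm u ^ 2 + t ^ 2" unfolding xpu inner_Pair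
        by (simp add: dot_square_norm power2_eq_square)
      then show ?thesis unfolding xd dn by (simp add: power2_eq_square field_simps)
    qed
    finally show ?thesis .
  qed
  have absa: "\<bar>a\<bar> \<le> norm u"
  proof -
    have "\<bar>inner u w\<bar> \<le> norm u * norm w" by (rule Cauchy_Schwarz_ineq2)
    then show ?thesis unfolding a_def using w0 by (simp add: abs_div divide_le_eq)
  qed
  have t0: "t \<ge> 0" using ut norm_ge_zero order_trans by blast
  have tx: "t \<le> norm x"
  proof -
    have "t \<le> norm xp" unfolding xpu norm_Pair by (simp add: real_le_rsqrt)
    then show ?thesis using xpx by simp
  qed
  have eps: "inner s xp = norm w * (a + t)" unfolding s xpu teq a_def using w0
    by (simp add: algebra_simps inner_commute)
  have ns: "norm s = sqrt 2 * norm w" unfolding s teq norm_Pair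
    by (simp add: real_sqrt_mult)
  have apt: "a + t \<ge> 0" using absa ut by linarith
  have rhs: "2 * sqrt 2 * (norm x * inner s xp) / norm s = 2 * norm x * (a + t)"
    unfolding eps ns using w0 by (simp add: field_simps)
  have u2: "norm u ^ 2 \<le> t ^ 2" using ut by (simp add: power_mono)
  have idq: "2 * t * (a + t) - (norm u ^ 2 + t ^ 2 - (t - a) ^ 2 / 2) = (t ^ 2 - norm u ^ 2) + (a + t) ^ 2 / 2"
    by (simp add: power2_eq_square field_simps)
  have "norm q ^ 2 \<le> 2 * t * (a + t)" unfolding qn using u2 idq zero_le_power2[of "a + t"]
    by linarith
  also have "\<dots> \<le> 2 * norm x * (a + t)" using tx apt by (simp add: mult_right_mono)
  finally have "norm p ^ 2 \<le> 2 * sqrt 2 * (norm x * inner s xp) / norm s"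
    unfolding rhs using pq by (meson norm_ge_zero order_trans power_mono)
  then have "sqrt (norm p ^ 2) \<le> sqrt (2 * sqrt 2 * (norm x * inner s xp) / norm s)"
    by (rule real_sqrt_le_mono)
  then show ?thesis unfolding p_def xp_def by simp
qed



lemma quad_disc:
  fixes a b c :: real
  assumes h: "\<And>t. 0 \<le> a + 2 * b * t + c * t ^ 2"
  shows "b ^ 2 \<le> a * c"
proof (cases "c = 0")
  case True
  have "b = 0"
  proof (rule ccontr)
    assume b: "b \<noteq> 0"
    have "0 \<le> a + 2 * b * (- (a + 1) / (2 * b))" using h[of "- (a + 1) / (2 * b)"] True by simp
    also have "\<dots> = -1" using b by (simp add: field_simps)
    finally show False by simp
  qed
  then show ?thesis using True by simp
next
  case False
  have c0: "c \<ge> 0"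
  proof (rule ccontr)
    assume "\<not> c \<ge> 0"
    then have cn: "c < 0" by simp
    define t where "t = (\<bar>a\<bar> + 2 * \<bar>b\<bar> + 1) / (- c) + 1"
    have t1: "t \<ge> 1" unfolding t_def using cn by (simp add: divide_nonneg_pos divide_nonneg_neg)
    have "- c * t \<ge> \<bar>a\<bar> + 2 * \<bar>b\<bar> + 1" unfolding t_def using cn by (simp add: field_simps)
    then have "- c * t * t \<ge> (\<bar>a\<bar> + 2 * \<bar>b\<bar> + 1) * t" using t1 mult_right_mono[of "\<bar>a\<bar> + 2 * \<bar>b\<bar> + 1" "- c * t" t] by simp
    moreover have "(\<bar>a\<bar> + 2 * \<bar>b\<bar> + 1) * t \<ge> \<bar>a\<bar> + 2 * \<bar>b\<bar> * t + t"
      using t1 mult_right_mono[of 1 t "\<bar>a\<bar>"] by (simp add: algebra_simps)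
    moreover have "a + 2 * b * t \<le> \<bar>a\<bar> + 2 * \<bar>b\<bar> * t" using t1
      using mult_right_mono[of b "\<bar>b\<bar>" t] abs_ge_self[of a] abs_ge_self[of b] by linarith
    moreover have "0 \<le> a + 2 * b * t + c * t * t" using h[of t] by (simp add: power2_eq_square)
    ultimately show False using t1 by linarith
  qed
  then have cp: "c > 0" using False by simp
  have "0 \<le> a + 2 * b * (- b / c) + c * (- b / c) ^ 2" by (rule h)
  also have "\<dots> = a - b ^ 2 / c" using cp by (simp add: field_simps power2_eq_square)
  finally show ?thesis using cp by (simp add: field_simps)
qed

lemma sym_dot:
  fixes M :: "real^'n^'n"
  assumes "transpose M = M"
  shows "u \<bullet> (M *v v) = (M *v u) \<bullet> v"
proof -
  have "u \<bullet> (M *v v) = (u v* M) \<bullet> v" by (simp add: dot_lmul_matrix)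
  also have "\<dots> = (transpose M *v u) \<bullet> v" by simp
  finally show ?thesis using assms by simp
qed

lemma form_expand:
  fixes M :: "real^'n^'n"
  assumes "transpose M = M"
  shows "(u + t *\<^sub>R v) \<bullet> (M *v (u + t *\<^sub>R v))
       = u \<bullet> (M *v u) + 2 * (u \<bullet> (M *v v)) * t + (v \<bullet> (M *v v)) * t ^ 2"
proof -
  have "v \<bullet> (M *v u) = u \<bullet> (M *v v)" using sym_dot[OF assms, of u v] by (simp add: inner_commute)
  then show ?thesis
    by (simp add: matrix_vector_right_distrib matrix_vector_mult_scaleR inner_add_left
        inner_add_right algebra_simps power2_eq_square)
qed

lemma form_cs:
  fixes M :: "real^'n^'n"
  assumes "transpose M = M" and "\<And>t. 0 \<le> (u + t *\<^sub>R v) \<bullet> (M *v (u + t *\<^sub>R v))"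
  shows "(u \<bullet> (M *v v)) ^ 2 \<le> (u \<bullet> (M *v u)) * (v \<bullet> (M *v v))"
  using assms(2) unfolding form_expand[OF assms(1)] by (rule quad_disc)

lemma shift_sym:
  fixes A :: "real^'n^'n"
  assumes "transpose A = A"
  shows "transpose (m *\<^sub>R mat 1 - A) = m *\<^sub>R mat 1 - A"
    and "(m *\<^sub>R mat 1 - A) *v v = m *\<^sub>R v - A *v v"
proof -
  show "transpose (m *\<^sub>R mat 1 - A) = m *\<^sub>R mat 1 - A"
    using assms by (simp add: vec_eq_iff transpose_def mat_def)
  show "(m *\<^sub>R mat 1 - A) *v v = m *\<^sub>R v - A *v v"
    by (simp add: matrix_vector_mult_diff_rdistrib scaleR_matrix_vector_assoc[symmetric])
qed

lemma max_eig:
  fixes A :: "real^'n^'n"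
  assumes sym: "transpose A = A" and sW: "subspace W" and inv: "\<And>w. w \<in> W \<Longrightarrow> A *v w \<in> W"
    and ne: "W \<noteq> {0}"
  shows "\<exists>g\<in>W. norm g = 1 \<and> A *v g = (g \<bullet> (A *v g)) *\<^sub>R g
           \<and> (\<forall>v\<in>W. v \<bullet> (A *v v) \<le> (g \<bullet> (A *v g)) * (norm v) ^ 2)"
proof -
  define C where "C = W \<inter> sphere 0 1"
  have cC: "compact C" unfolding C_def using closed_subspace[OF sW] compact_sphere by blast
  obtain w where w: "w \<in> W" "w \<noteq> 0" using ne subspace_0[OF sW] by blast
  have "w /\<^sub>R norm w \<in> C" unfolding C_def using w sW by (simp add: subspace_mul)
  then have neC: "C \<noteq> {}" by blast
  have ct: "continuous_on C (\<lambda>v. v \<bullet> (A *v v))"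
    by (intro continuous_intros linear_continuous_on matrix_vector_mul_bounded_linear)
  obtain g where gC: "g \<in> C" and gmax: "\<And>y. y \<in> C \<Longrightarrow> y \<bullet> (A *v y) \<le> g \<bullet> (A *v g)"
    using continuous_attains_sup[OF cC neC ct] by blast
  define \<mu> where "\<mu> = g \<bullet> (A *v g)"
  have gW: "g \<in> W" and g1: "norm g = 1" using gC unfolding C_def by auto
  have bnd: "v \<bullet> (A *v v) \<le> \<mu> * (norm v) ^ 2" if v: "v \<in> W" for v
  proof (cases "v = 0")
    case True then show ?thesis by simp
  next
    case False
    have "v /\<^sub>R norm v \<in> C" unfolding C_def using v False sW by (simp add: subspace_mul)
    then have "(v /\<^sub>R norm v) \<bullet> (A *v (v /\<^sub>R norm v)) \<le> \<mu>" using gmax unfolding \<mu>_def by blast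
    then have "(v \<bullet> (A *v v)) / (norm v) ^ 2 \<le> \<mu>"
      by (simp add: matrix_vector_mult_scaleR power2_eq_square divide_inverse mult_ac)
    then show ?thesis using False by (simp add: divide_le_eq mult.commute)
  qed
  define N where "N = \<mu> *\<^sub>R mat 1 - A"
  have Ns: "transpose N = N" unfolding N_def by (rule shift_sym(1)[OF sym])
  have Nv: "N *v v = \<mu> *\<^sub>R v - A *v v" for v unfolding N_def by (rule shift_sym(2)[OF sym])
  have Npos: "0 \<le> v \<bullet> (N *v v)" if "v \<in> W" for v
    using bnd[OF that] by (simp add: Nv inner_diff_right dot_square_norm)
  define r where "r = \<mu> *\<^sub>R g - A *v g"
  have rW: "r \<in> W" unfolding r_def using gW inv sW by (simp add: subspace_diff subspace_mul)
  have Ng: "N *v g = r" unfolding r_def by (simp add: Nv)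
  have gNg: "g \<bullet> (N *v g) = 0" unfolding Ng r_def \<mu>_def using g1
    by (simp add: inner_diff_right dot_square_norm)
  have "(r \<bullet> (N *v g)) ^ 2 \<le> (r \<bullet> (N *v r)) * (g \<bullet> (N *v g))"
  proof (rule form_cs[OF Ns])
    fix t :: real
    have "r + t *\<^sub>R g \<in> W" using rW gW sW by (simp add: subspace_add subspace_mul)
    then show "0 \<le> (r + t *\<^sub>R g) \<bullet> (N *v (r + t *\<^sub>R g))" by (rule Npos)
  qed
  then have "(r \<bullet> (N *v g)) ^ 2 \<le> 0" unfolding gNg by simp
  then have "r \<bullet> r = 0" unfolding Ng by simp
  then have "r = 0" by simp
  then have "A *v g = \<mu> *\<^sub>R g" unfolding r_def by simp
  then show ?thesis using gW g1 bnd unfolding \<mu>_def by blast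
qed

lemma spectral_sub:
  fixes A :: "real^'n^'n"
  assumes sym: "transpose A = A"
  shows "subspace W \<Longrightarrow> (\<And>w. w \<in> W \<Longrightarrow> A *v w \<in> W) \<Longrightarrow>
    \<exists>B. B \<subseteq> W \<and> pairwise orthogonal B \<and> (\<forall>b\<in>B. norm b = 1) \<and> span B = W
        \<and> (\<forall>b\<in>B. A *v b = (b \<bullet> (A *v b)) *\<^sub>R b)"
proof (induct "dim W" arbitrary: W rule: less_induct)
  case less
  note sW = less.prems(1) and inv = less.prems(2)
  show ?case
  proof (cases "W = {0}")
    case True
    then show ?thesis by (intro exI[of _ "{}"]) auto
  next
    case False
    obtain g where gW: "g \<in> W" and g1: "norm g = 1" and geig: "A *v g = (g \<bullet> (A *v g)) *\<^sub>R g"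
      using max_eig[OF sym sW inv False] by blast
    define W' where "W' = {w \<in> W. w \<bullet> g = 0}"
    have sW': "subspace W'" unfolding W'_def using sW
      by (auto simp: subspace_def inner_add_left)
    have inv': "A *v w \<in> W'" if "w \<in> W'" for w
    proof -
      have "(A *v w) \<bullet> g = w \<bullet> (A *v g)" using sym_dot[OF sym, of w g] by simp
      also have "\<dots> = 0" using that unfolding W'_def by (subst geig) simp
      finally show ?thesis using that inv unfolding W'_def by auto
    qed
    have W'W: "W' \<subseteq> W" unfolding W'_def by auto
    have gn: "g \<notin> W'" unfolding W'_def using g1 by (simp add: dot_square_norm)
    have "dim W' < dim W"
    proof (rule dim_psubset)
      have e1: "span W' = W'" "span W = W" using sW sW' by (auto simp: span_eq_iff)
      show "span W' \<subset> span W" unfolding e1 using W'W gW gn by blast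
    qed
    from less.hyps[OF this sW' inv'] obtain B' where B': "B' \<subseteq> W'" "pairwise orthogonal B'"
      "\<forall>b\<in>B'. norm b = 1" "span B' = W'" "\<forall>b\<in>B'. A *v b = (b \<bullet> (A *v b)) *\<^sub>R b" by blast
    define B where "B = insert g B'"
    have "B \<subseteq> W" unfolding B_def using B'(1) W'W gW by auto
    moreover have "pairwise orthogonal B" unfolding B_def
    proof (rule pairwise_orthogonal_insert[OF B'(2)])
      fix y assume "y \<in> B'"
      then have "y \<bullet> g = 0" using B'(1) unfolding W'_def by auto
      then show "orthogonal g y" unfolding orthogonal_def by (simp add: inner_commute)
    qed
    moreover have "\<forall>b\<in>B. norm b = 1" unfolding B_def using B'(3) g1 by auto
    moreover have "span B = W"
    proof
      show "span B \<subseteq> W" using \<open>B \<subseteq> W\<close> sW by (simp add: span_minimal)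
      show "W \<subseteq> span B"
      proof
        fix w assume w: "w \<in> W"
        define w' where "w' = w - (w \<bullet> g) *\<^sub>R g"
        have "w' \<in> W'" unfolding W'_def w'_def using w gW sW g1
          by (simp add: subspace_diff subspace_mul inner_diff_left dot_square_norm)
        then have "w' \<in> span B" unfolding B_def using B'(4) by (metis span_mono subset_insertI subsetD)
        moreover have "(w \<bullet> g) *\<^sub>R g \<in> span B" unfolding B_def by (simp add: span_base span_mul)
        ultimately have "w' + (w \<bullet> g) *\<^sub>R g \<in> span B" by (rule span_add)
        then show "w \<in> span B" unfolding w'_def by simp
      qed
    qed
    moreover have "\<forall>b\<in>B. A *v b = (b \<bullet> (A *v b)) *\<^sub>R b" unfolding B_def using B'(5) geig by auto
    ultimately show ?thesis by blast
  qed
qed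

lemma onb_finite:
  fixes B :: "'a::euclidean_space set"
  assumes "pairwise orthogonal B" "\<forall>b\<in>B. norm b = 1"
  shows "finite B"
proof -
  have "0 \<notin> B" using assms(2) by auto
  then have "independent B" using pairwise_orthogonal_independent[OF assms(1)] by blast
  then show ?thesis using independent_bound by blast
qed

lemma parseval:
  fixes B :: "'a::euclidean_space set"
  assumes po: "pairwise orthogonal B" and n1: "\<forall>b\<in>B. norm b = 1" and sp: "span B = UNIV"
  shows "x \<bullet> y = (\<Sum>b\<in>B. (x \<bullet> b) * (y \<bullet> b))"
proof -
  have fB: "finite B" by (rule onb_finite[OF po n1])
  have "x = (\<Sum>b\<in>B. (x \<bullet> b) *\<^sub>R b)"
    using orthonormal_basis_expand[OF po _ _ fB, of x] n1 sp by auto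
  then have "x \<bullet> y = (\<Sum>b\<in>B. (x \<bullet> b) *\<^sub>R b) \<bullet> y" by simp
  also have "\<dots> = (\<Sum>b\<in>B. (x \<bullet> b) * (b \<bullet> y))" by (simp add: inner_sum_left)
  also have "\<dots> = (\<Sum>b\<in>B. (x \<bullet> b) * (y \<bullet> b))" by (rule sum.cong) (auto simp: inner_commute)
  finally show ?thesis .
qed

lemma frob:
  fixes B :: "(real^'n) set" and M1 M2 :: "real^'n^'n"
  assumes po: "pairwise orthogonal B" and n1: "\<forall>b\<in>B. norm b = 1" and sp: "span B = UNIV"
  shows "M1 \<bullet> M2 = (\<Sum>b\<in>B. \<Sum>c\<in>B. (b \<bullet> (M1 *v c)) * (b \<bullet> (M2 *v c)))"
proof -
  note P = parseval[OF po n1 sp]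
  have "M1 \<bullet> M2 = (\<Sum>i\<in>UNIV. (M1 $ i) \<bullet> (M2 $ i))" by (simp add: inner_vec_def)
  also have "\<dots> = (\<Sum>i\<in>UNIV. \<Sum>c\<in>B. ((M1 $ i) \<bullet> c) * ((M2 $ i) \<bullet> c))"
    by (rule sum.cong[OF refl]) (rule P)
  also have "\<dots> = (\<Sum>c\<in>B. \<Sum>i\<in>UNIV. (M1 *v c) $ i * (M2 *v c) $ i)"
    by (subst sum.swap) (simp add: matrix_vector_mul_component)
  also have "\<dots> = (\<Sum>c\<in>B. (M1 *v c) \<bullet> (M2 *v c))" by (simp add: inner_vec_def)
  also have "\<dots> = (\<Sum>c\<in>B. \<Sum>b\<in>B. ((M1 *v c) \<bullet> b) * ((M2 *v c) \<bullet> b))"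
    by (rule sum.cong[OF refl]) (rule P)
  also have "\<dots> = (\<Sum>b\<in>B. \<Sum>c\<in>B. (b \<bullet> (M1 *v c)) * (b \<bullet> (M2 *v c)))"
    by (subst sum.swap) (intro sum.cong refl, simp add: inner_commute)
  finally show ?thesis .
qed

definition outer :: "real^'n \<Rightarrow> real^'n^'n" where
  "outer v = (\<chi> i j. v $ i * v $ j)"

lemma outer_mv: "outer v *v w = (v \<bullet> w) *\<^sub>R v"
  by (simp add: vec_eq_iff outer_def matrix_vector_mult_def inner_vec_def sum_distrib_left mult_ac)

lemma outer_sym: "transpose (outer v) = outer v"
  by (simp add: vec_eq_iff outer_def transpose_def mult.commute)

lemma inner_outer: "M \<bullet> outer v = v \<bullet> (M *v v)"
  by (simp add: outer_def inner_vec_def matrix_vector_mult_def sum_distrib_left mult_ac)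

lemma outer_form: "w \<bullet> (outer v *v w) = (v \<bullet> w) ^ 2"
  by (simp add: outer_mv power2_eq_square inner_commute)

lemma K_props:
  defines "E \<equiv> {M::real^'n^'n. transpose M = M}"
  defines "K \<equiv> {M \<in> E. \<forall>v. 0 \<le> v \<bullet> (M *v v)}"
  shows "closed K" "convex K" "K \<noteq> {}" "cone K" "subspace E" "closed E" "\<And>v. outer v \<in> K"
proof -
  have Kq: "K = {M. (\<forall>i j. M $ i $ j = M $ j $ i) \<and> (\<forall>v. 0 \<le> M \<bullet> outer v)}"
    unfolding K_def E_def by (auto simp: inner_outer vec_eq_iff transpose_def)
  show "closed K" unfolding Kq
    by (intro closed_Collect_all closed_Collect_eq closed_Collect_le closed_Collect_conj
        continuous_intros linear_continuous_on bounded_linear_vec_nth)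
  show "convex K" unfolding K_def E_def convex_def
    by (auto simp: transpose_def vec_eq_iff matrix_vector_mult_add_rdistrib
        scaleR_matrix_vector_assoc[symmetric] inner_add_right)
  show "K \<noteq> {}" unfolding K_def E_def by (auto intro!: exI[of _ 0] simp: transpose_def vec_eq_iff)
  show "cone K" unfolding K_def E_def cone_def
    by (auto simp: transpose_def vec_eq_iff scaleR_matrix_vector_assoc[symmetric])
  show sE: "subspace E" unfolding E_def subspace_def
    by (auto simp: transpose_def vec_eq_iff)
  show "closed E" by (rule closed_subspace[OF sE])
  show "outer v \<in> K" for v unfolding K_def E_def by (simp add: outer_sym outer_form)
qed

lemma lmax_bound:
  fixes X :: "real^'n^'n"
  defines "E \<equiv> {M::real^'n^'n. transpose M = M}"
  defines "K \<equiv> {M \<in> E. \<forall>v. 0 \<le> v \<bullet> (M *v v)}"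
  assumes XE: "X \<in> E"
  shows "v \<bullet> (closest_point K X *v v) \<le> onorm (\<lambda>v. X *v v) * (norm v) ^ 2"
proof -
  have Kp: "closed K" "convex K" "K \<noteq> {}" "cone K" "\<And>v. outer v \<in> K"
    unfolding K_def E_def by (rule K_props)+
  note pc = proj_cone[OF Kp(1-4), where y=X]
  define Xp where "Xp = closest_point K X"
  define M where "M = onorm (\<lambda>v. X *v v)"
  have M0: "M \<ge> 0" unfolding M_def by (rule onorm_pos_le) simp
  have XpK: "Xp \<in> K" unfolding Xp_def by (rule pc(1))
  have Xps: "transpose Xp = Xp" and Xpp: "\<And>v. 0 \<le> v \<bullet> (Xp *v v)"
    using XpK unfolding K_def E_def by auto
  have ne: "(UNIV :: (real^'n) set) \<noteq> {0}"
  proof -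
    obtain i :: 'n where True by blast
    have "axis i (1::real) \<noteq> 0" by (simp add: axis_eq_0_iff)
    then show ?thesis by auto
  qed
  obtain g where g1: "norm g = 1" and geig: "Xp *v g = (g \<bullet> (Xp *v g)) *\<^sub>R g"
    and gb: "\<And>v. v \<bullet> (Xp *v v) \<le> (g \<bullet> (Xp *v g)) * (norm v) ^ 2"
    using max_eig[OF Xps subspace_UNIV _ ne] by blast
  define \<mu> where "\<mu> = g \<bullet> (Xp *v g)"
  have "\<mu> \<le> M"
  proof (cases "\<mu> \<le> 0")
    case True then show ?thesis using M0 by simp
  next
    case False
    then have mu0: "\<mu> > 0" by simp
    define Z where "Z = Xp - \<mu> *\<^sub>R outer g"
    have Zv: "Z *v v = Xp *v v - (\<mu> * (g \<bullet> v)) *\<^sub>R g" for v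
      unfolding Z_def by (simp add: matrix_vector_mult_diff_rdistrib
          scaleR_matrix_vector_assoc[symmetric] outer_mv)
    have ZK: "Z \<in> K" unfolding K_def E_def
    proof (intro CollectI conjI allI)
      show "transpose Z = Z" unfolding Z_def using Xps outer_sym[of g]
        by (simp add: vec_eq_iff transpose_def)
      fix v :: "real^'n"
      define t where "t = g \<bullet> v"
      define w where "w = v - t *\<^sub>R g"
      have gg: "g \<bullet> g = 1" using g1 by (simp add: dot_square_norm)
      have wg: "w \<bullet> g = 0" unfolding w_def t_def
        by (simp add: inner_diff_left gg inner_commute[of v g])
      have vw: "v = w + t *\<^sub>R g" unfolding w_def by simp
      have "v \<bullet> (Xp *v v) = w \<bullet> (Xp *v w) + 2 * (w \<bullet> (Xp *v g)) * t + \<mu> * t ^ 2"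
        unfolding \<mu>_def by (subst vw)+ (rule form_expand[OF Xps])
      also have "w \<bullet> (Xp *v g) = 0" by (subst geig) (simp add: wg)
      finally have "v \<bullet> (Xp *v v) = w \<bullet> (Xp *v w) + \<mu> * t ^ 2" by simp
      then have "v \<bullet> (Xp *v v) \<ge> \<mu> * t ^ 2" using Xpp[of w] by simp
      then show "0 \<le> v \<bullet> (Z *v v)" unfolding Zv t_def
        by (simp add: inner_diff_right power2_eq_square inner_commute)
    qed
    have "inner (X - Xp) Z \<le> 0" using pc(3)[OF ZK] unfolding Xp_def .
    moreover have "inner (X - Xp) Xp = 0" using pc(2) unfolding Xp_def[symmetric]
      by (simp add: inner_diff_left)
    ultimately have "\<mu> * inner (X - Xp) (outer g) \<ge> 0" unfolding Z_def
      by (simp add: inner_diff_right)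
    then have "inner (X - Xp) (outer g) \<ge> 0" using mu0 by (simp add: zero_le_mult_iff)
    then have "g \<bullet> ((X - Xp) *v g) \<ge> 0" by (simp add: inner_outer)
    then have "\<mu> \<le> g \<bullet> (X *v g)" unfolding \<mu>_def
      by (simp add: matrix_vector_mult_diff_rdistrib inner_diff_right)
    also have "\<dots> \<le> norm g * norm (X *v g)" by (rule norm_cauchy_schwarz)
    also have "\<dots> \<le> M" unfolding M_def using onorm[of "\<lambda>v. X *v v" g] g1 by simp
    finally show ?thesis .
  qed
  have "v \<bullet> (Xp *v v) \<le> \<mu> * (norm v) ^ 2" using gb unfolding \<mu>_def Xp_def by blast
  also have "\<dots> \<le> M * (norm v) ^ 2" using \<open>\<mu> \<le> M\<close> by (simp add: mult_right_mono)
  finally show ?thesis unfolding Xp_def M_def .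
qed

lemma sq_bound:
  fixes Y :: "real^'n^'n"
  assumes sym: "transpose Y = Y" and psd: "\<And>v. 0 \<le> v \<bullet> (Y *v v)"
    and bd: "\<And>v. v \<bullet> (Y *v v) \<le> M * (norm v) ^ 2" and M0: "M \<ge> 0"
  shows "(norm (Y *v u)) ^ 2 \<le> M * (u \<bullet> (Y *v u))"
proof -
  define y where "y = Y *v u"
  have "(u \<bullet> (Y *v y)) ^ 2 \<le> (u \<bullet> (Y *v u)) * (y \<bullet> (Y *v y))"
    by (rule form_cs[OF sym psd])
  moreover have "u \<bullet> (Y *v y) = (norm y) ^ 2" using sym_dot[OF sym, of u y]
    by (simp add: y_def dot_square_norm)
  moreover have "(u \<bullet> (Y *v u)) * (y \<bullet> (Y *v y)) \<le> (u \<bullet> (Y *v u)) * (M * (norm y) ^ 2)"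
    using bd[of y] psd[of u] by (rule mult_left_mono)
  ultimately have h: "(norm y ^ 2) * (norm y ^ 2) \<le> ((u \<bullet> (Y *v u)) * M) * (norm y ^ 2)"
    by (simp add: power2_eq_square mult_ac)
  show ?thesis
  proof (cases "y = 0")
    case True then show ?thesis using psd[of u] M0 by (simp add: y_def)
  next
    case False
    then have "norm y ^ 2 > 0" by simp
    with h have "norm y ^ 2 \<le> (u \<bullet> (Y *v u)) * M"
      using mult_le_cancel_right_pos[of "norm y ^ 2" "norm y ^ 2" "(u \<bullet> (Y *v u)) * M"] by (simp only: mult.commute)
    then show ?thesis by (simp add: y_def mult.commute)
  qed
qed



lemma part5_core:
  fixes S X :: "real^'n^'n"
  defines "E \<equiv> {M::real^'n^'n. transpose M = M}"
  defines "K \<equiv> {M \<in> E. \<forall>v. 0 \<le> v \<bullet> (M *v v)}"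
  assumes SD: "S \<in> dual_cone E K" and S0: "S \<noteq> 0" and XE: "X \<in> E"
  shows "norm (closest_point (orth_in E (compl_space K S)) (closest_point K X))
        \<le> inner S (closest_point K X) / Min {l. l \<noteq> 0 \<and> eigval S l}
          + sqrt (2 * (inner S (closest_point K X) / Min {l. l \<noteq> 0 \<and> eigval S l}) * onorm (\<lambda>v. X *v v))"
proof -
  have Kp: "closed K" "convex K" "K \<noteq> {}" "cone K" "\<And>v. outer v \<in> K"
    unfolding K_def E_def by (rule K_props)+
  have sE: "subspace E" unfolding E_def by (rule K_props)
  note pc = proj_cone[OF Kp(1-4), where y=X]
  have Ssym: "transpose S = S" using SD unfolding dual_cone_def E_def by auto
  have SK: "\<And>Z. Z \<in> K \<Longrightarrow> 0 \<le> S \<bullet> Z" using SD unfolding dual_cone_def by auto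
  have Spsd: "0 \<le> v \<bullet> (S *v v)" for v using SK[OF Kp(5)[of v]] by (simp add: inner_outer)
  obtain B where Bpo: "pairwise orthogonal B" and Bn: "\<forall>b\<in>B. norm b = 1" and Bsp: "span B = UNIV"
      and Beig: "\<forall>b\<in>B. S *v b = (b \<bullet> (S *v b)) *\<^sub>R b"
    using spectral_sub[OF Ssym, of UNIV] by auto
  have fB: "finite B" by (rule onb_finite[OF Bpo Bn])
  note PV = parseval[OF Bpo Bn Bsp]
  note FR = frob[OF Bpo Bn Bsp]
  have orth: "b \<bullet> c = (if b = c then 1 else 0)" if "b \<in> B" "c \<in> B" for b c
    using Bpo Bn that by (auto simp: pairwise_def orthogonal_def dot_square_norm)
  define lam where "lam b = b \<bullet> (S *v b)" for b
  have Sb: "S *v b = lam b *\<^sub>R b" if "b \<in> B" for b using Beig that unfolding lam_def by auto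
  have lam0: "lam b \<ge> 0" for b unfolding lam_def by (rule Spsd)
  define L where "L = {l. l \<noteq> 0 \<and> eigval S l}"
  have LB: "L \<subseteq> lam ` B"
  proof
    fix l assume "l \<in> L"
    then obtain v where v0: "v \<noteq> 0" and Sv: "S *v v = l *\<^sub>R v" and l0: "l \<noteq> 0"
      unfolding L_def eigval_def by auto
    have "\<exists>b\<in>B. v \<bullet> b \<noteq> 0"
    proof (rule ccontr)
      assume "\<not> ?thesis"
      then have "v \<bullet> v = 0" using PV[of v v] by simp
      then show False using v0 by simp
    qed
    then obtain b where bB: "b \<in> B" and vb: "v \<bullet> b \<noteq> 0" by blast
    have "(S *v v) \<bullet> b = v \<bullet> (S *v b)" using sym_dot[OF Ssym, of v b] by simp
    then have "l * (v \<bullet> b) = lam b * (v \<bullet> b)" using Sv Sb[OF bB] by simp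
    then have "l = lam b" using vb by simp
    then show "l \<in> lam ` B" using bB by blast
  qed
  have fL: "finite L" using LB fB finite_subset by blast
  have lamL: "lam b \<in> L" if "b \<in> B" "lam b \<noteq> 0" for b
  proof -
    have "b \<noteq> 0" using Bn that by auto
    then show ?thesis unfolding L_def eigval_def using Sb[OF that(1)] that(2) by auto
  qed
  have neL: "L \<noteq> {}"
  proof
    assume Le: "L = {}"
    have "S *v v = 0" for v
    proof -
      have "(S *v v) \<bullet> (S *v v) = (\<Sum>b\<in>B. ((S *v v) \<bullet> b) * ((S *v v) \<bullet> b))" by (rule PV)
      also have "\<dots> = 0"
      proof (rule sum.neutral, intro ballI)
        fix b assume bB: "b \<in> B"
        have "lam b = 0" using lamL[OF bB] Le by auto
        then have "(S *v v) \<bullet> b = 0" using sym_dot[OF Ssym, of v b] Sb[OF bB] by simp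
        then show "((S *v v) \<bullet> b) * ((S *v v) \<bullet> b) = 0" by simp
      qed
      finally show ?thesis by simp
    qed
    then have "S = 0" by (simp add: matrix_eq)
    then show False using S0 by simp
  qed
  define T where "T = Min L"
  have TL: "T \<in> L" unfolding T_def using fL neL by simp
  have Tpos: "T > 0"
  proof -
    obtain v where v0: "v \<noteq> 0" and Sv: "S *v v = T *\<^sub>R v" and T0: "T \<noteq> 0"
      using TL unfolding L_def eigval_def by auto
    have "0 \<le> v \<bullet> (S *v v)" by (rule Spsd)
    also have "\<dots> = T * (v \<bullet> v)" using Sv by simp
    finally have "0 \<le> T * (v \<bullet> v)" .
    moreover have "v \<bullet> v > 0" using v0 by simp
    ultimately show ?thesis using T0 by (simp add: zero_le_mult_iff)
  qed
  have Tle: "T \<le> lam b" if "b \<in> B" "lam b \<noteq> 0" for b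
    unfolding T_def using fL lamL[OF that] by simp
  define Xp where "Xp = closest_point K X"
  have XpK: "Xp \<in> K" unfolding Xp_def by (rule pc(1))
  have Xps: "transpose Xp = Xp" and Xpp: "\<And>v. 0 \<le> v \<bullet> (Xp *v v)"
    using XpK unfolding K_def E_def by auto
  define Mx where "Mx = onorm (\<lambda>v. X *v v)"
  have M0: "Mx \<ge> 0" unfolding Mx_def by (rule onorm_pos_le) simp
  have lmb: "v \<bullet> (Xp *v v) \<le> Mx * (norm v) ^ 2" for v
    unfolding Xp_def Mx_def K_def E_def by (rule lmax_bound[OF XE[unfolded E_def]])
  define Y where "Y b c = b \<bullet> (Xp *v c)" for b c
  have Ysym: "Y b c = Y c b" for b c unfolding Y_def using sym_dot[OF Xps, of b c]
    by (simp add: inner_commute)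
  have Ydiag: "Y b b \<ge> 0" for b unfolding Y_def by (rule Xpp)
  have Yrow: "(\<Sum>c\<in>B. (Y b c) ^ 2) \<le> Mx * Y b b" for b
  proof -
    have "(\<Sum>c\<in>B. (Y b c) ^ 2) = (Xp *v b) \<bullet> (Xp *v b)"
      unfolding PV[of "Xp *v b" "Xp *v b"] Y_def
      by (rule sum.cong[OF refl]) (simp add: sym_dot[OF Xps] power2_eq_square)
    also have "\<dots> = (norm (Xp *v b)) ^ 2" by (simp add: dot_square_norm)
    also have "\<dots> \<le> Mx * (b \<bullet> (Xp *v b))" by (rule sq_bound[OF Xps Xpp lmb M0])
    finally show ?thesis unfolding Y_def .
  qed
  define p where "p = closest_point (orth_in E (compl_space K S)) Xp"
  note pp = proj_orth[OF sE, where K=K and s=S and y=Xp, folded p_def]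
  have psym: "transpose p = p" using pp(1) unfolding E_def by auto
  have pker: "v \<bullet> (p *v v) = 0" if "S *v v = 0" for v
  proof -
    have "outer v \<in> compl_face K S" unfolding compl_face_def
      using Kp(5)[of v] that by (simp add: inner_commute[of "outer v" S] inner_outer)
    from pp(3)[OF this] show ?thesis by (simp add: inner_outer)
  qed
  define P where "P b c = b \<bullet> (p *v c)" for b c
  have Pker: "P b c = 0" if "b \<in> B" "c \<in> B" "lam b = 0" "lam c = 0" for b c
  proof -
    have kb: "S *v b = 0" using Sb[OF that(1)] that(3) by simp
    have kc: "S *v c = 0" using Sb[OF that(2)] that(4) by simp
    have "S *v (b + 1 *\<^sub>R c) = 0" using kb kc by (simp add: matrix_vector_right_distrib)
    then have "(b + 1 *\<^sub>R c) \<bullet> (p *v (b + 1 *\<^sub>R c)) = 0" by (rule pker)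
    then have "b \<bullet> (p *v b) + 2 * (b \<bullet> (p *v c)) * 1 + (c \<bullet> (p *v c)) * 1 ^ 2 = 0"
      unfolding form_expand[OF psym] .
    then show ?thesis unfolding P_def using pker[OF kb] pker[OF kc] by simp
  qed
  define ep where "ep = inner S Xp"
  have ep_eq: "ep = (\<Sum>b\<in>B. lam b * Y b b)"
  proof -
    have "ep = (\<Sum>b\<in>B. \<Sum>c\<in>B. (b \<bullet> (S *v c)) * Y b c)" unfolding ep_def Y_def by (rule FR)
    also have "\<dots> = (\<Sum>b\<in>B. \<Sum>c\<in>B. (if c = b then lam b * Y b c else 0))"
      by (intro sum.cong refl) (auto simp: Sb orth)
    also have "\<dots> = (\<Sum>b\<in>B. lam b * Y b b)" using fB by (simp add: sum.delta)
    finally show ?thesis .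
  qed
  define a where "a = (\<Sum>b\<in>B. if lam b \<noteq> 0 then Y b b else 0)"
  have a0: "a \<ge> 0" unfolding a_def by (rule sum_nonneg) (simp add: Ydiag)
  have Ta: "T * a \<le> ep" unfolding a_def ep_eq sum_distrib_left
  proof (rule sum_mono)
    fix b assume bB: "b \<in> B"
    show "T * (if lam b \<noteq> 0 then Y b b else 0) \<le> lam b * Y b b"
      using Tle[OF bB] Ydiag[of b] by (auto intro: mult_right_mono)
  qed
  define e where "e = ep / T"
  have ae: "a \<le> e" unfolding e_def using Ta Tpos by (simp add: field_simps mult.commute)
  have e0: "e \<ge> 0" using a0 ae by simp
  define Y' where "Y' b c = (if lam b = 0 \<and> lam c = 0 then 0 else Y b c)" for b c
  have "inner p p = inner p Xp" using pp(2) by (simp add: inner_commute)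
  also have "\<dots> = (\<Sum>b\<in>B. \<Sum>c\<in>B. P b c * Y b c)" unfolding P_def Y_def by (rule FR)
  also have "\<dots> = (\<Sum>b\<in>B. \<Sum>c\<in>B. P b c * Y' b c)"
    by (intro sum.cong refl) (auto simp: Y'_def Pker)
  also have "\<dots> = (\<Sum>bc\<in>B \<times> B. P (fst bc) (snd bc) * Y' (fst bc) (snd bc))"
    by (simp add: sum.cartesian_product case_prod_beta)
  finally have pp1: "inner p p = (\<Sum>bc\<in>B \<times> B. P (fst bc) (snd bc) * Y' (fst bc) (snd bc))" .
  have pp2: "inner p p = (\<Sum>bc\<in>B \<times> B. (P (fst bc) (snd bc)) ^ 2)"
    unfolding FR[of p p] P_def by (simp add: sum.cartesian_product case_prod_beta power2_eq_square)
  define G where "G = (\<Sum>bc\<in>B \<times> B. (Y' (fst bc) (snd bc)) ^ 2)"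
  have cs: "(inner p p) ^ 2 \<le> inner p p * G"
    unfolding G_def using Cauchy_Schwarz_ineq_sum[of "\<lambda>bc. P (fst bc) (snd bc)"
        "\<lambda>bc. Y' (fst bc) (snd bc)" "B \<times> B"] pp1 pp2 by simp
  have pG: "inner p p \<le> G"
  proof (cases "p = 0")
    case True
    have "G \<ge> 0" unfolding G_def by (rule sum_nonneg) simp
    then show ?thesis using True by simp
  next
    case False
    then have "inner p p > 0" by simp
    then show ?thesis using cs by (simp add: power2_eq_square)
  qed
  have G_le: "G \<le> 2 * Mx * a"
  proof -
    have "G = (\<Sum>b\<in>B. \<Sum>c\<in>B. (Y' b c) ^ 2)" unfolding G_def by (simp add: sum.cartesian_product case_prod_beta)
    also have "\<dots> \<le> (\<Sum>b\<in>B. \<Sum>c\<in>B. (if lam b \<noteq> 0 then (Y b c) ^ 2 else 0)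
                                  + (if lam c \<noteq> 0 then (Y b c) ^ 2 else 0))"
      by (intro sum_mono) (auto simp: Y'_def)
    also have "\<dots> = (\<Sum>b\<in>B. \<Sum>c\<in>B. (if lam b \<noteq> 0 then (Y b c) ^ 2 else 0))
                   + (\<Sum>b\<in>B. \<Sum>c\<in>B. (if lam c \<noteq> 0 then (Y b c) ^ 2 else 0))"
      by (simp add: sum.distrib)
    also have "(\<Sum>b\<in>B. \<Sum>c\<in>B. (if lam c \<noteq> 0 then (Y b c) ^ 2 else 0))
             = (\<Sum>b\<in>B. \<Sum>c\<in>B. (if lam b \<noteq> 0 then (Y b c) ^ 2 else 0))"
      by (subst sum.swap) (intro sum.cong refl, simp add: Ysym[of _ b for b])
    also have "(\<Sum>b\<in>B. \<Sum>c\<in>B. (if lam b \<noteq> 0 then (Y b c) ^ 2 else 0))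
             = (\<Sum>b\<in>B. if lam b \<noteq> 0 then (\<Sum>c\<in>B. (Y b c) ^ 2) else 0)"
      by (intro sum.cong refl) auto
    also have "\<dots> \<le> (\<Sum>b\<in>B. if lam b \<noteq> 0 then Mx * Y b b else 0)"
      by (intro sum_mono) (simp add: Yrow)
    also have "\<dots> = Mx * a" unfolding a_def sum_distrib_left by (intro sum.cong refl) auto
    finally show ?thesis by simp
  qed
  have "(norm p) ^ 2 \<le> 2 * e * Mx"
  proof -
    have "(norm p) ^ 2 = inner p p" by (simp add: dot_square_norm)
    also have "\<dots> \<le> 2 * Mx * a" using pG G_le by simp
    also have "\<dots> \<le> 2 * Mx * e" using ae M0 by (simp add: mult_left_mono)
    finally show ?thesis by (simp add: mult_ac)
  qed
  then have "sqrt ((norm p) ^ 2) \<le> sqrt (2 * e * Mx)" by (rule real_sqrt_le_mono)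
  then have "norm p \<le> sqrt (2 * e * Mx)" by simp
  also have "\<dots> \<le> e + sqrt (2 * e * Mx)" using e0 by simp
  finally show ?thesis unfolding p_def Xp_def e_def ep_def T_def L_def Mx_def .
qed


theorem lemma3:
  shows
  "(\<forall>(E::'a::euclidean_space set) K (A::'a \<Rightarrow> 'f::euclidean_space) b c ystar x.
      conic_setting E K A b c ystar \<and> x \<in> E \<and> c - adjE E A ystar = 0 \<longrightarrow>
      norm (closest_point (orth_in E (compl_space K (c - adjE E A ystar))) (closest_point K x)) = 0)
 \<and> (\<forall>(E::'a::euclidean_space set) K (A::'a \<Rightarrow> 'f::euclidean_space) b c ystar x.
      conic_setting E K A b c ystar \<and> x \<in> E \<and> c - adjE E A ystar \<in> int_in E (dual_cone E K) \<longrightarrow>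
      (let s = c - adjE E A ystar; xp = closest_point K x;
           Q = {1 / inner s (z /\<^sub>R norm z) | z. z \<in> K - {0}}
       in bdd_above Q
          \<and> norm (closest_point (orth_in E (compl_space K s)) xp) = norm xp
          \<and> norm xp \<le> Sup Q * inner s xp))
 \<and> (\<forall>(A::real^'n \<Rightarrow> 'f) b c ystar x.
      let K = {v::real^'n. \<forall>i. 0 \<le> v $ i}; s = c - adjE UNIV A ystar in
      conic_setting UNIV K A b c ystar \<and> s \<in> bd_in UNIV (dual_cone UNIV K) \<and> s \<noteq> 0 \<longrightarrow>
      norm (closest_point (orth_in UNIV (compl_space K s)) (closest_point K x))
        \<le> (1 / Min {s $ i | i. s $ i \<noteq> 0}) * inner s (closest_point K x))
 \<and> (\<forall>(A::(real^'n) \<times> real \<Rightarrow> 'f) b c ystar x.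
      let K = {(u::real^'n, t::real). norm u \<le> t}; s = c - adjE UNIV A ystar in
      conic_setting UNIV K A b c ystar \<and> s \<in> bd_in UNIV (dual_cone UNIV K) \<and> s \<noteq> 0 \<longrightarrow>
      norm (closest_point (orth_in UNIV (compl_space K s)) (closest_point K x))
        \<le> sqrt (2 * sqrt 2 * (norm x * inner s (closest_point K x)) / norm s))
 \<and> (\<forall>(A::real^'n^'n \<Rightarrow> 'f) b c ystar X.
      let E = {M::real^'n^'n. transpose M = M};
          K = {M \<in> E. \<forall>v. 0 \<le> v \<bullet> (M *v v)};
          S = c - adjE E A ystar;
          Xp = closest_point K X;
          ep = inner S Xp;
          T = Min {l. l \<noteq> 0 \<and> eigval S l} in
      conic_setting E K A b c ystar \<and> X \<in> E \<and> S \<in> bd_in E (dual_cone E K) \<and> S \<noteq> 0 \<longrightarrow>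
      norm (closest_point (orth_in E (compl_space K S)) Xp)
        \<le> ep / T + sqrt (2 * (ep / T) * onorm (\<lambda>v. X *v v)))"
proof (intro conjI allI impI)
  show "norm (closest_point (orth_in E (compl_space K (c - adjE E A ystar))) (closest_point K x)) = 0"
    if "conic_setting E K A b c ystar \<and> x \<in> E \<and> c - adjE E A ystar = 0"
    for E :: "'a set" and K and A :: "'a \<Rightarrow> 'f" and b c ystar x
    using part1 that by blast
  show "let s = c - adjE E A ystar; xp = closest_point K x;
           Q = {1 / inner s (z /\<^sub>R norm z) | z. z \<in> K - {0}}
       in bdd_above Q
          \<and> norm (closest_point (orth_in E (compl_space K s)) xp) = norm xp
          \<and> norm xp \<le> Sup Q * inner s xp"
    if "conic_setting E K A b c ystar \<and> x \<in> E \<and> c - adjE E A ystar \<in> int_in E (dual_cone E K)"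
    for E :: "'a set" and K and A :: "'a \<Rightarrow> 'f" and b c ystar x
    using part2 that by blast
  show "let K = {v::real^'n. \<forall>i. 0 \<le> v $ i}; s = c - adjE UNIV A ystar in
      conic_setting UNIV K A b c ystar \<and> s \<in> bd_in UNIV (dual_cone UNIV K) \<and> s \<noteq> 0 \<longrightarrow>
      norm (closest_point (orth_in UNIV (compl_space K s)) (closest_point K x))
        \<le> (1 / Min {s $ i | i. s $ i \<noteq> 0}) * inner s (closest_point K x)"
    for A :: "real^'n \<Rightarrow> 'f" and b c ystar x
    unfolding Let_def using part3_core cs_facts(3) by blast
  show "let K = {(u::real^'n, t::real). norm u \<le> t}; s = c - adjE UNIV A ystar in
      conic_setting UNIV K A b c ystar \<and> s \<in> bd_in UNIV (dual_cone UNIV K) \<and> s \<noteq> 0 \<longrightarrow>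
      norm (closest_point (orth_in UNIV (compl_space K s)) (closest_point K x))
        \<le> sqrt (2 * sqrt 2 * (norm x * inner s (closest_point K x)) / norm s)"
    for A :: "(real^'n) \<times> real \<Rightarrow> 'f" and b c ystar x
    unfolding Let_def bd_in_def using part4_core cs_facts(3) by blast
  show "let E = {M::real^'n^'n. transpose M = M};
          K = {M \<in> E. \<forall>v. 0 \<le> v \<bullet> (M *v v)};
          S = c - adjE E A ystar;
          Xp = closest_point K X;
          ep = inner S Xp;
          T = Min {l. l \<noteq> 0 \<and> eigval S l} in
      conic_setting E K A b c ystar \<and> X \<in> E \<and> S \<in> bd_in E (dual_cone E K) \<and> S \<noteq> 0 \<longrightarrow>
      norm (closest_point (orth_in E (compl_space K S)) Xp)
        \<le> ep / T + sqrt (2 * (ep / T) * onorm (\<lambda>v. X *v v))"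
    for A :: "real^'n^'n \<Rightarrow> 'f" and b c ystar X
    unfolding Let_def using part5_core cs_facts(3) by blast
qed

end
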